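(* Let $n\ge1$. (1) The number of linked partitions of $[n]$ is $n!$. (2) For each $k$, the number of linked partitions of $[n]$ with exactly $k$ singly covered minimal elements is the signless Stirling number of the first kind $c(n,k)$. (3) For each $k$, the number of linked partitions $\pi$ of $[n]$ with $\beta(\pi)=k$ is the Eulerian number $A(n,k)$, where $\beta(\pi)$ is the number of singly covered elements $i$ with $i\ne\min(B[i])$ plus the number of singleton blocks of $\pi$.
   Context: Two finite sets of integers $E,F$ are nearly disjoint if for every $i\in E\cap F$ either ($i=\min(E)$, $|E|>1$, $i\ne\min(F)$) or ($i=\min(F)$, $|F|>1$, $i\ne\min(E)$). A linked partition of $[n]$ is a set of nonempty subsets (blocks) of $[n]$ with union $[n]$, any two distinct blocks nearly disjoint. Every element lies in exactly one or two blocks (singly/doubly covered); for singly covered $i$, $B[i]$ denotes the block containing $i$. A singly covered minimal element is a singly covered $i$ with $i=\min(B[i])$. $c(n,k)$ is the number of permutations of $[n]$ with exactly $k$ cycles; $A(n,k)$ is the number of permutations of $[n]$ with exactly $k-1$ descents. *)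

theory Defs
  imports "HOL-Combinatorics.Combinatorics"
begin

definition nearly_disjoint :: "nat set \<Rightarrow> nat set \<Rightarrow> bool" where
  "nearly_disjoint E F \<longleftrightarrow>
     (\<forall>i \<in> E \<inter> F.
        (i = Min E \<and> card E > 1 \<and> i \<noteq> Min F) \<or>
        (i = Min F \<and> card F > 1 \<and> i \<noteq> Min E))"

definition linked_partitions :: "nat \<Rightarrow> nat set set set" where
  "linked_partitions n = {\<pi>. (\<forall>B \<in> \<pi>. B \<noteq> {} \<and> B \<subseteq> {1..n}) \<and> \<Union>\<pi> = {1..n} \<and>
       (\<forall>E \<in> \<pi>. \<forall>F \<in> \<pi>. E \<noteq> F \<longrightarrow> nearly_disjoint E F)}"

definition singly_covered :: "nat set set \<Rightarrow> nat \<Rightarrow> bool" where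
  "singly_covered \<pi> i \<longleftrightarrow> card {B \<in> \<pi>. i \<in> B} = 1"

(* B[i]: the block containing a singly covered element i *)
definition block_of :: "nat set set \<Rightarrow> nat \<Rightarrow> nat set" where
  "block_of \<pi> i = (THE B. B \<in> \<pi> \<and> i \<in> B)"

definition num_singly_min :: "nat \<Rightarrow> nat set set \<Rightarrow> nat" where
  "num_singly_min n \<pi> = card {i \<in> {1..n}. singly_covered \<pi> i \<and> i = Min (block_of \<pi> i)}"

definition beta :: "nat \<Rightarrow> nat set set \<Rightarrow> nat" where
  "beta n \<pi> = card {i \<in> {1..n}. singly_covered \<pi> i \<and> i \<noteq> Min (block_of \<pi> i)}
              + card {B \<in> \<pi>. card B = 1}"

definition num_cycles :: "nat \<Rightarrow> (nat \<Rightarrow> nat) \<Rightarrow> nat" where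
  "num_cycles n p = card ((\<lambda>x. {(p ^^ m) x | m. True}) ` {1..n})"

definition stirling_cycles :: "nat \<Rightarrow> nat \<Rightarrow> nat" where
  "stirling_cycles n k = card {p. p permutes {1..n} \<and> num_cycles n p = k}"

definition num_descents :: "nat \<Rightarrow> (nat \<Rightarrow> nat) \<Rightarrow> nat" where
  "num_descents n p = card {i \<in> {1..<n}. p i > p (Suc i)}"

(* A(n,k): permutations of [n] with exactly k-1 descents (so A(n,0) = 0) *)
definition eulerian :: "nat \<Rightarrow> nat \<Rightarrow> nat" where
  "eulerian n k = card {p. p permutes {1..n} \<and> num_descents n p + 1 = k}"

end

theory Submission
  imports Defs
begin

lemma sum_if_const: "finite A \<Longrightarrow> (\<Sum>a\<in>A. if P a then (c::nat) else 0) = c * card {a\<in>A. P a}"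
  by (simp add: sum.If_cases Int_def conj_commute)

lemma bij_betw_filter:
  assumes "bij_betw f A B" shows "bij_betw f {x\<in>A. P (f x)} {y\<in>B. P y}"
proof -
  have "inj_on f {x\<in>A. P (f x)}" using assms unfolding bij_betw_def by (auto intro: inj_on_subset)
  moreover have "f ` {x\<in>A. P (f x)} = {y\<in>B. P y}"
  proof
    show "f ` {x\<in>A. P (f x)} \<subseteq> {y\<in>B. P y}" using bij_betwE[OF assms] by blast
    show "{y\<in>B. P y} \<subseteq> f ` {x\<in>A. P (f x)}"
    proof
      fix y assume "y \<in> {y\<in>B. P y}"
      then obtain x where "x \<in> A" "f x = y" "P y" using assms unfolding bij_betw_def by auto
      then show "y \<in> f ` {x\<in>A. P (f x)}" by auto
    qed
  qed
  ultimately show ?thesis unfolding bij_betw_def by simp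
qed

lemma count_rec:
  fixes \<phi> :: "'x \<Rightarrow> 'a \<times> 'c"
  assumes bij: "bij_betw \<phi> X (Sigma A C)" and fA: "finite A" and fC: "\<And>a. a\<in>A \<Longrightarrow> finite (C a)"
  and stat: "\<And>x. x\<in>X \<Longrightarrow> s' x = s (fst (\<phi> x)) + (if \<delta> (fst (\<phi> x)) (snd (\<phi> x)) then 1 else 0)"
  and g0: "\<And>a. a\<in>A \<Longrightarrow> card {c\<in>C a. \<not> \<delta> a c} = g0 (s a)"
  and g1: "\<And>a. a\<in>A \<Longrightarrow> card {c\<in>C a. \<delta> a c} = g1 (s a)"
  shows "card {x\<in>X. s' x = k} = g0 k * card {a\<in>A. s a = k} + g1 (k - 1) * card {a\<in>A. Suc (s a) = k}"
proof -
  let ?Q = "\<lambda>y. s (fst y) + (if \<delta> (fst y) (snd y) then 1 else 0) = k"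
  have e1: "{x\<in>X. s' x = k} = {x\<in>X. ?Q (\<phi> x)}" using stat by auto
  have bf: "bij_betw \<phi> {x\<in>X. ?Q (\<phi> x)} {y\<in>Sigma A C. ?Q y}"
    using bij_betw_filter[OF bij] .
  then have "card {x\<in>X. s' x = k} = card {y\<in>Sigma A C. ?Q y}"
    using bij_betw_same_card[OF bf] e1 by simp
  also have "{y\<in>Sigma A C. ?Q y} = Sigma A (\<lambda>a. {c\<in>C a. ?Q (a,c)})" by auto
  also have "card \<dots> = (\<Sum>a\<in>A. card {c\<in>C a. ?Q (a,c)})"
    using fA fC by simp
  also have "\<dots> = (\<Sum>a\<in>A. (if s a = k then g0 k else 0) + (if Suc (s a) = k then g1 (k - 1) else 0))"
  proof (rule sum.cong)
    fix a assume a: "a \<in> A"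
    show "card {c\<in>C a. ?Q (a,c)} = (if s a = k then g0 k else 0) + (if Suc (s a) = k then g1 (k - 1) else 0)"
    proof (cases "s a = k")
      case True
      then have "{c\<in>C a. ?Q (a,c)} = {c\<in>C a. \<not> \<delta> a c}" by auto
      then show ?thesis using g0[OF a] True by simp
    next
      case False
      show ?thesis
      proof (cases "Suc (s a) = k")
        case True
        then have "{c\<in>C a. ?Q (a,c)} = {c\<in>C a. \<delta> a c}" by auto
        then show ?thesis using g1[OF a] True by auto
      next
        case F2: False
        then have "{c\<in>C a. ?Q (a,c)} = {}" using False by auto
        then show ?thesis using False F2 by simp
      qed
    qed
  qed simp
  also have "\<dots> = g0 k * card {a\<in>A. s a = k} + g1 (k - 1) * card {a\<in>A. Suc (s a) = k}"
    by (simp add: sum.distrib sum_if_const fA)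
  finally show ?thesis .
qed

definition SE :: "nat \<Rightarrow> (nat \<Rightarrow> nat) set" where
  "SE n = {f. (\<forall>j\<in>{1..n}. f j < j) \<and> (\<forall>j. j \<notin> {1..n} \<longrightarrow> f j = 0)}"

definition NI :: "nat \<Rightarrow> (nat \<Rightarrow> nat) \<Rightarrow> nat set" where
  "NI n f = {j\<in>{1..n}. j \<notin> f ` {1..n}}"

definition zeros :: "nat \<Rightarrow> (nat \<Rightarrow> nat) \<Rightarrow> nat" where
  "zeros n f = card {j\<in>{1..n}. f j = 0}"

definition nonim :: "nat \<Rightarrow> (nat \<Rightarrow> nat) \<Rightarrow> nat" where
  "nonim n f = card (NI n f)"

lemma SE_0: "SE 0 = {\<lambda>_. 0}"
  unfolding SE_def by auto

definition seph :: "nat \<Rightarrow> (nat \<Rightarrow> nat) \<Rightarrow> (nat \<Rightarrow> nat) \<times> nat" where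
  "seph n f = (f(Suc n := 0), f (Suc n))"

lemma seph_bij: "bij_betw (seph n) (SE (Suc n)) (SE n \<times> {0..n})"
proof (rule bij_betw_byWitness[where f'="\<lambda>(g,v). g(Suc n := v)"])
  show "\<forall>a\<in>SE (Suc n). (\<lambda>(g,v). g(Suc n := v)) (seph n a) = a"
    by (auto simp: seph_def)
  show "\<forall>a'\<in>SE n \<times> {0..n}. seph n ((\<lambda>(g,v). g(Suc n := v)) a') = a'"
    by (auto simp: seph_def SE_def fun_eq_iff)
  show "seph n ` SE (Suc n) \<subseteq> SE n \<times> {0..n}"
  proof
    fix y assume "y \<in> seph n ` SE (Suc n)"
    then obtain f where f: "f \<in> SE (Suc n)" "y = seph n f" by auto
    have "f (Suc n) < Suc n" using f(1) unfolding SE_def by auto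
    moreover have "f(Suc n := 0) \<in> SE n" using f(1) unfolding SE_def by auto
    ultimately show "y \<in> SE n \<times> {0..n}" using f(2) by (auto simp: seph_def)
  qed
  show "(\<lambda>(g,v). g(Suc n := v)) ` (SE n \<times> {0..n}) \<subseteq> SE (Suc n)"
    by (auto simp: SE_def)
qed

lemma finite_SE: "finite (SE n)"
proof (induction n)
  case 0 then show ?case by (simp add: SE_0)
next
  case (Suc n)
  then show ?case using bij_betw_finite[OF seph_bij] by simp
qed

lemma card_SE: "card (SE n) = fact n"
proof (induction n)
  case 0 then show ?case by (simp add: SE_0)
next
  case (Suc n)
  then show ?case using bij_betw_same_card[OF seph_bij[of n]] by (simp add: card_cartesian_product)
qed

lemma zeros_step:
  assumes "f \<in> SE (Suc n)"
  shows "zeros (Suc n) f = zeros n (fst (seph n f)) + (if snd (seph n f) = 0 then 1 else 0)"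
proof -
  have "{j\<in>{1..Suc n}. f j = 0} = {j\<in>{1..n}. (f(Suc n := 0)) j = 0} \<union> (if f (Suc n) = 0 then {Suc n} else {})"
    by auto
  then show ?thesis unfolding zeros_def seph_def by auto
qed

lemma NI_step:
  assumes "f \<in> SE (Suc n)"
  shows "NI (Suc n) f = insert (Suc n) (NI n (f(Suc n := 0)) - {f (Suc n)})"
proof -
  have im: "f ` {1..Suc n} = insert (f (Suc n)) ((f(Suc n := 0)) ` {1..n})"
    by (auto simp: image_iff atLeastAtMostSuc_conv)
  have "Suc n \<notin> f ` {1..Suc n}" using assms unfolding SE_def
    by (auto simp: image_iff)
  then show ?thesis unfolding NI_def im by auto
qed

lemma NI_sub: "NI n f \<subseteq> {1..n}" unfolding NI_def by auto

lemma nonim_step: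
  assumes "f \<in> SE (Suc n)"
  shows "nonim (Suc n) f = nonim n (fst (seph n f)) + (if snd (seph n f) \<notin> NI n (fst (seph n f)) then 1 else 0)"
proof -
  let ?g = "f(Suc n := 0)" and ?v = "f (Suc n)"
  have fin: "finite (NI n ?g)" using NI_sub finite_subset by blast
  have nin: "Suc n \<notin> NI n ?g - {?v}" using NI_sub[of n ?g] by auto
  have "card (NI (Suc n) f) = Suc (card (NI n ?g - {?v}))"
    using NI_step[OF assms] fin nin by simp
  moreover have "card (NI n ?g - {?v}) = card (NI n ?g) - (if ?v \<in> NI n ?g then 1 else 0)"
    using fin by auto
  moreover have "?v \<in> NI n ?g \<Longrightarrow> card (NI n ?g) \<ge> 1"
    using fin by (metis One_nat_def Suc_leI card_gt_0_iff empty_iff)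
  ultimately show ?thesis unfolding nonim_def seph_def by auto
qed

lemma SE_zeros_rec:
  "card {f\<in>SE (Suc n). zeros (Suc n) f = k} =
     n * card {g\<in>SE n. zeros n g = k} + 1 * card {g\<in>SE n. Suc (zeros n g) = k}"
proof (rule count_rec[OF seph_bij, where s = "zeros n" and \<delta> = "\<lambda>g v. v = 0"])
  show "finite (SE n)" by (rule finite_SE)
  show "\<And>a. finite {0..n}" by simp
  show "\<And>x. x \<in> SE (Suc n) \<Longrightarrow> zeros (Suc n) x = zeros n (fst (seph n x)) + (if snd (seph n x) = 0 then 1 else 0)"
    by (rule zeros_step)
  show "\<And>a. card {c\<in>{0..n}. \<not> c = 0} = n"
  proof -
    have "{c\<in>{0..n}. \<not> c = 0} = {1..n}" by auto
    then show "card {c\<in>{0..n}. \<not> c = 0} = n" by simp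
  qed
  show "\<And>a. card {c\<in>{0..n}. c = 0} = 1"
  proof -
    have "{c\<in>{0..n}. c = 0} = {0}" by auto
    then show "card {c\<in>{0..n}. c = 0} = 1" by simp
  qed
qed

lemma SE_nonim_rec:
  "card {f\<in>SE (Suc n). nonim (Suc n) f = k} =
     k * card {g\<in>SE n. nonim n g = k} + (Suc n - (k - 1)) * card {g\<in>SE n. Suc (nonim n g) = k}"
proof (rule count_rec[OF seph_bij, where s = "nonim n" and \<delta> = "\<lambda>g v. v \<notin> NI n g"])
  show "finite (SE n)" by (rule finite_SE)
  show "\<And>a. finite {0..n}" by simp
  show "\<And>x. x \<in> SE (Suc n) \<Longrightarrow> nonim (Suc n) x = nonim n (fst (seph n x)) + (if snd (seph n x) \<notin> NI n (fst (seph n x)) then 1 else 0)"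
    by (rule nonim_step)
  fix g
  have e: "{c\<in>{0..n}. \<not> c \<notin> NI n g} = NI n g" using NI_sub[of n g] by auto
  then show "card {c\<in>{0..n}. \<not> c \<notin> NI n g} = nonim n g" by (simp add: nonim_def)
  have "{c\<in>{0..n}. c \<notin> NI n g} = {0..n} - NI n g" by auto
  moreover have "NI n g \<subseteq> {0..n}" using NI_sub[of n g] by auto
  ultimately show "card {c\<in>{0..n}. c \<notin> NI n g} = Suc n - nonim n g"
    by (simp add: card_Diff_subset finite_subset nonim_def)
qed

definition orb :: "(nat \<Rightarrow> nat) \<Rightarrow> nat \<Rightarrow> nat set" where
  "orb p x = {(p ^^ m) x | m. True}"

lemma num_cycles_orb: "num_cycles n p = card (orb p ` {1..n})"
  unfolding num_cycles_def orb_def by simp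

lemma orb_self: "x \<in> orb f x"
  unfolding orb_def by (auto intro: exI[of _ 0])

lemma orb_closed: "y \<in> orb f x \<Longrightarrow> f y \<in> orb f x"
  unfolding orb_def by (auto intro: exI[of _ "Suc m" for m])

lemma orb_least:
  assumes "x \<in> S" "\<And>y. y \<in> S \<Longrightarrow> f y \<in> S"
  shows "orb f x \<subseteq> S"
proof
  fix z assume "z \<in> orb f x"
  then obtain m where "z = (f ^^ m) x" unfolding orb_def by auto
  moreover have "(f ^^ m) x \<in> S" by (induction m) (use assms in auto)
  ultimately show "z \<in> S" by simp
qed

lemma orb_eq:
  assumes "permutation p" "y \<in> orb p x"
  shows "orb p y = orb p x"
proof -
  have e: "orb p z = orbit p z" for z
    using orbit_altdef_permutation[OF assms(1), of z] unfolding orb_def by simp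
  have xx: "x \<in> orbit p x" using permutation_self_in_orbit[OF assms(1)] .
  have yx: "y \<in> orbit p x" using assms(2) e by simp
  have xy: "x \<in> orbit p y" using orbit_swap[OF xx yx] .
  show ?thesis unfolding e using orbit_trans[OF _ yx] orbit_trans[OF _ xy] by blast
qed

lemma orb_fix: "f x = x \<Longrightarrow> orb f x = {x}"
proof -
  assume a: "f x = x"
  have "(f ^^ m) x = x" for m by (induction m) (use a in auto)
  then show ?thesis unfolding orb_def by auto
qed

lemma cycles_step:
  assumes p: "p permutes {1..n}" and c: "c \<in> {1..Suc n}"
  shows "card (orb (p \<circ> transpose c (Suc n)) ` {1..Suc n}) = card (orb p ` {1..n}) + (if c = Suc n then 1 else 0)"
proof -
  let ?N = "Suc n"
  define q where "q = p \<circ> transpose c ?N"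
  have pN: "p ?N = ?N" using permutes_not_in[OF p] by simp
  have pperm: "permutation p" using permutes_imp_permutation[OF _ p] by simp
  have pin: "p y \<in> {1..n} \<longleftrightarrow> y \<in> {1..n}" for y using permutes_in_image[OF p] .
  have orbsub: "x \<in> {1..n} \<Longrightarrow> orb p x \<subseteq> {1..n}" for x
    by (rule orb_least) (use pin in auto)
  have fin: "finite (orb p ` {1..n})" by simp
  show ?thesis
  proof (cases "c = ?N")
    case True
    then have q: "q = p" unfolding q_def by simp
    have "orb p ` {1..?N} = insert {?N} (orb p ` {1..n})"
      using orb_fix[of p ?N, OF pN] by (auto simp: atLeastAtMostSuc_conv)
    moreover have "{?N} \<notin> orb p ` {1..n}"
    proof
      assume "{?N} \<in> orb p ` {1..n}"
      then obtain x where "x \<in> {1..n}" "orb p x = {?N}" by auto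
      then show False using orb_self[of x p] by auto
    qed
    ultimately show ?thesis using q True fin unfolding q_def by simp
  next
    case False
    then have cn: "c \<in> {1..n}" using c by auto
    define C where "C = orb p c"
    have CS: "C \<subseteq> {1..n}" using orbsub[OF cn] C_def by simp
    have qperm: "q permutes {1..?N}" unfolding q_def
      by (rule permutes_compose) (use c permutes_subset[OF p] in \<open>auto intro: permutes_swap_id\<close>)
    have qy: "y \<noteq> c \<Longrightarrow> y \<noteq> ?N \<Longrightarrow> q y = p y" for y unfolding q_def by simp
    have qc: "q c = ?N" unfolding q_def using pN by simp
    have qN: "q ?N = p c" unfolding q_def by simp
    have pinj: "p y = ?N \<Longrightarrow> y = ?N" for y using permutes_inj[OF p] pN by (metis injD)
    have Cclosed: "y \<in> C \<Longrightarrow> p y \<in> C" for y unfolding C_def by (rule orb_closed)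
    have cC: "c \<in> C" unfolding C_def by (rule orb_self)
    have NC: "?N \<notin> C" using CS by auto
    have out: "orb q x = orb p x" if x: "x \<in> {1..n} - C" for x
    proof -
      let ?S = "orb p x"
      have cS: "c \<notin> ?S"
      proof
        assume "c \<in> ?S"
        then have "orb p c = orb p x" by (rule orb_eq[OF pperm])
        then show False using x orb_self[of x p] C_def by auto
      qed
      have NS: "?N \<notin> ?S" using orbsub[of x] x by auto
      have "orb q x \<subseteq> ?S"
        by (rule orb_least) (use orb_self orb_closed qy cS NS in \<open>metis\<close>)+
      moreover have "?S \<subseteq> orb q x"
      proof (rule orb_least)
        show "x \<in> orb q x" by (rule orb_self)
        fix y assume "y \<in> orb q x"
        moreover have "y \<noteq> c" "y \<noteq> ?N" using \<open>orb q x \<subseteq> ?S\<close> \<open>y \<in> orb q x\<close> cS NS by auto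
        ultimately show "p y \<in> orb q x" using qy orb_closed by metis
      qed
      ultimately show ?thesis by blast
    qed
    have inside: "orb q x = insert ?N C" if x: "x \<in> insert ?N C" for x
    proof -
      define T where "T = orb q x"
      have xT: "x \<in> T" unfolding T_def by (rule orb_self)
      have Tc: "y \<in> T \<Longrightarrow> q y \<in> T" for y unfolding T_def by (rule orb_closed)
      have sub1: "T \<subseteq> insert ?N C" unfolding T_def
      proof (rule orb_least[OF x])
        fix y assume "y \<in> insert ?N C"
        then show "q y \<in> insert ?N C"
          using qc qN Cclosed cC qy by (cases "y = c"; cases "y = ?N") auto
      qed
      have pT: "p y \<in> T - {?N}" if "y \<in> T - {?N}" "y \<noteq> c" for y
        using that Tc[of y] qy[of y] pinj[of y] by auto
      have cT: "c \<in> T"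
      proof (rule ccontr)
        assume ncT: "c \<notin> T"
        show False
        proof (cases "?N \<in> T")
          case True
          have "orb p (p c) \<subseteq> T - {?N}"
          proof (rule orb_least)
            show "p c \<in> T - {?N}" using Tc[OF True] qN pinj False by auto
            fix y assume "y \<in> T - {?N}"
            then show "p y \<in> T - {?N}" using pT ncT by auto
          qed
          moreover have "c \<in> orb p (p c)"
            using orb_eq[OF pperm orb_closed[OF orb_self, of p c]] orb_self[of c p] by simp
          ultimately show False using ncT by auto
        next
          case nT: False
          then have xC: "x \<in> C" using x xT by auto
          have "orb p x \<subseteq> T"
          proof (rule orb_least[OF xT])
            fix y assume "y \<in> T" then show "p y \<in> T" using pT ncT nT by auto
          qed
          moreover have "orb p x = C" unfolding C_def using orb_eq[OF pperm xC[unfolded C_def]] .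
          ultimately show False using cC ncT by auto
        qed
      qed
      have NT: "?N \<in> T" using Tc[OF cT] qc by simp
      have "C \<subseteq> T - {?N}" unfolding C_def
      proof (rule orb_least)
        show "c \<in> T - {?N}" using cT False by auto
        fix y assume y: "y \<in> T - {?N}"
        show "p y \<in> T - {?N}"
        proof (cases "y = c")
          case True then show ?thesis using Tc[OF NT] qN pinj False by auto
        next
          case False then show ?thesis using pT y by auto
        qed
      qed
      then show ?thesis using sub1 NT unfolding T_def by auto
    qed
    have split: "{1..?N} = ({1..n} - C) \<union> insert ?N C" using CS by auto
    have img1: "orb q ` {1..?N} = insert (insert ?N C) (orb p ` ({1..n} - C))"
    proof -
      have a: "orb q ` ({1..n} - C) = orb p ` ({1..n} - C)" by (rule image_cong[OF refl out])
      have "orb q ` insert ?N C = (\<lambda>_. insert ?N C) ` insert ?N C" by (rule image_cong[OF refl inside])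
      then have b: "orb q ` insert ?N C = {insert ?N C}" by (simp only: image_constant[OF insertI1])
      have "orb q ` {1..?N} = orb q ` ({1..n} - C) \<union> orb q ` insert ?N C"
        by (subst split) (rule image_Un)
      also have "\<dots> = orb p ` ({1..n} - C) \<union> {insert ?N C}" by (simp only: a b)
      finally show ?thesis by auto
    qed
    have img2: "orb p ` {1..n} = insert C (orb p ` ({1..n} - C))"
    proof -
      have "orb p ` C = (\<lambda>_. C) ` C" by (rule image_cong[OF refl]) (use orb_eq[OF pperm] C_def in simp)
      then have b: "orb p ` C = {C}" using cC by auto
      have "{1..n} = ({1..n} - C) \<union> C" using CS by auto
      then have "orb p ` {1..n} = orb p ` ({1..n} - C) \<union> orb p ` C" by (metis image_Un)
      also have "\<dots> = orb p ` ({1..n} - C) \<union> {C}" by (simp only: b)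
      finally show ?thesis by auto
    qed
    have n1: "C \<notin> orb p ` ({1..n} - C)"
    proof
      assume "C \<in> orb p ` ({1..n} - C)"
      then obtain x where "x \<in> {1..n} - C" "orb p x = C" by auto
      then show False using orb_self[of x p] by auto
    qed
    have n2: "insert ?N C \<notin> orb p ` ({1..n} - C)"
    proof
      assume "insert ?N C \<in> orb p ` ({1..n} - C)"
      then obtain x where "x \<in> {1..n} - C" "orb p x = insert ?N C" by auto
      then show False using orbsub[of x] by auto
    qed
    show ?thesis unfolding q_def[symmetric] img1 img2 using n1 n2 False by simp
  qed
qed

definition P :: "nat \<Rightarrow> (nat \<Rightarrow> nat) set" where
  "P n = {p. p permutes {1..n}}"

lemma finite_P: "finite (P n)" unfolding P_def by (rule finite_permutations) simp

lemma P_0: "P 0 = {id}" unfolding P_def by simp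

definition cdec :: "nat \<Rightarrow> (nat \<Rightarrow> nat) \<Rightarrow> (nat \<Rightarrow> nat) \<times> nat" where
  "cdec n p = (p \<circ> transpose (inv p (Suc n)) (Suc n), inv p (Suc n))"

lemma cdec_bij: "bij_betw (cdec n) (P (Suc n)) (P n \<times> {1..Suc n})"
proof (rule bij_betw_byWitness[where f'="\<lambda>(p,c). p \<circ> transpose c (Suc n)"])
  show "\<forall>a\<in>P (Suc n). (\<lambda>(p,c). p \<circ> transpose c (Suc n)) (cdec n a) = a"
    by (auto simp: cdec_def comp_assoc)
  show "\<forall>a'\<in>P n \<times> {1..Suc n}. cdec n ((\<lambda>(p,c). p \<circ> transpose c (Suc n)) a') = a'"
  proof
    fix a' assume "a' \<in> P n \<times> {1..Suc n}"
    then obtain p c where a: "a' = (p,c)" "p permutes {1..n}" "c \<in> {1..Suc n}" by (auto simp: P_def)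
    have pp: "p \<circ> transpose c (Suc n) permutes {1..Suc n}"
      by (rule permutes_compose) (use a permutes_subset[OF a(2)] in \<open>auto intro: permutes_swap_id\<close>)
    have "(p \<circ> transpose c (Suc n)) c = Suc n" using permutes_not_in[OF a(2)] by simp
    then have "inv (p \<circ> transpose c (Suc n)) (Suc n) = c" using permutes_inv_eq[OF pp] by blast
    then show "cdec n ((\<lambda>(p,c). p \<circ> transpose c (Suc n)) a') = a'"
      using a by (simp add: cdec_def comp_assoc)
  qed
  show "cdec n ` P (Suc n) \<subseteq> P n \<times> {1..Suc n}"
  proof
    fix y assume "y \<in> cdec n ` P (Suc n)"
    then obtain p where p: "p permutes {1..Suc n}" "y = cdec n p" by (auto simp: P_def)
    let ?c = "inv p (Suc n)"
    have c: "?c \<in> {1..Suc n}" using permutes_in_image[OF permutes_inv[OF p(1)]] by simp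
    have pc: "p ?c = Suc n" using permutes_inverses[OF p(1)] by simp
    have q: "p \<circ> transpose ?c (Suc n) permutes {1..Suc n}"
      by (rule permutes_compose) (use p c in \<open>auto intro: permutes_swap_id\<close>)
    have "p \<circ> transpose ?c (Suc n) permutes {1..n}"
      proof (rule permutes_superset[OF q])
      fix x assume "x \<in> {1..Suc n} - {1..n}"
      then have "x = Suc n" by auto
      then show "(p \<circ> transpose ?c (Suc n)) x = x" using pc by simp
    qed
    then show "y \<in> P n \<times> {1..Suc n}" using p c by (simp add: cdec_def P_def)
  qed
  show "(\<lambda>(p,c). p \<circ> transpose c (Suc n)) ` (P n \<times> {1..Suc n}) \<subseteq> P (Suc n)"
  proof
    fix y assume "y \<in> (\<lambda>(p,c). p \<circ> transpose c (Suc n)) ` (P n \<times> {1..Suc n})"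
    then obtain p c where a: "y = p \<circ> transpose c (Suc n)" "p permutes {1..n}" "c \<in> {1..Suc n}" by (auto simp: P_def)
    have "p \<circ> transpose c (Suc n) permutes {1..Suc n}"
      by (rule permutes_compose) (use a permutes_subset[OF a(2)] in \<open>auto intro: permutes_swap_id\<close>)
    then show "y \<in> P (Suc n)" using a by (simp add: P_def)
  qed
qed

lemma cycles_stat:
  assumes "p' \<in> P (Suc n)"
  shows "num_cycles (Suc n) p' = num_cycles n (fst (cdec n p')) + (if snd (cdec n p') = Suc n then 1 else 0)"
proof -
  have "cdec n p' \<in> P n \<times> {1..Suc n}" using bij_betwE[OF cdec_bij] assms by blast
  then have a: "fst (cdec n p') permutes {1..n}" "snd (cdec n p') \<in> {1..Suc n}" by (auto simp: P_def)
  have "p' = fst (cdec n p') \<circ> transpose (snd (cdec n p')) (Suc n)"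
    by (simp add: cdec_def comp_assoc)
  then show ?thesis using cycles_step[OF a] by (simp add: num_cycles_orb)
qed

lemma P_cycles_rec:
  "card {p\<in>P (Suc n). num_cycles (Suc n) p = k} =
     n * card {g\<in>P n. num_cycles n g = k} + 1 * card {g\<in>P n. Suc (num_cycles n g) = k}"
proof (rule count_rec[OF cdec_bij, where s = "num_cycles n" and \<delta> = "\<lambda>g v. v = Suc n"])
  show "finite (P n)" by (rule finite_P)
  show "\<And>a. finite {1..Suc n}" by simp
  show "\<And>x. x \<in> P (Suc n) \<Longrightarrow> num_cycles (Suc n) x = num_cycles n (fst (cdec n x)) + (if snd (cdec n x) = Suc n then 1 else 0)"
    by (rule cycles_stat)
  show "\<And>a. card {c\<in>{1..Suc n}. \<not> c = Suc n} = n"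
  proof -
    have "{c\<in>{1..Suc n}. \<not> c = Suc n} = {1..n}" by auto
    then show "card {c\<in>{1..Suc n}. \<not> c = Suc n} = n" by simp
  qed
  show "\<And>a. card {c\<in>{1..Suc n}. c = Suc n} = 1"
  proof -
    have "{c\<in>{1..Suc n}. c = Suc n} = {Suc n}" by auto
    then show "card {c\<in>{1..Suc n}. c = Suc n} = 1" by simp
  qed
qed

definition ins :: "nat \<Rightarrow> nat \<Rightarrow> nat \<Rightarrow> nat" where
  "ins N j i = (if i < j then i else if i = j then N else if i \<le> N then i - 1 else i)"

definition del :: "nat \<Rightarrow> nat \<Rightarrow> nat \<Rightarrow> nat" where
  "del N j i = (if i < j then i else if i < N then i + 1 else if i = N then j else i)"

lemma ins_del: "j \<le> N \<Longrightarrow> ins N j (del N j i) = i"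
  unfolding ins_def del_def by auto

lemma del_ins: "1 \<le> j \<Longrightarrow> j \<le> N \<Longrightarrow> del N j (ins N j i) = i"
  unfolding ins_def del_def by auto

lemma ins_permutes: assumes "1 \<le> j" "j \<le> N" shows "ins N j permutes {1..N}"
proof (rule bij_imp_permutes)
  show "bij_betw (ins N j) {1..N} {1..N}"
    by (rule bij_betw_byWitness[where f'="del N j"]) (use assms in \<open>auto simp: ins_del del_ins, auto simp: ins_def del_def\<close>)
  show "\<And>x. x \<notin> {1..N} \<Longrightarrow> ins N j x = x" using assms by (auto simp: ins_def)
qed

lemma del_permutes: assumes "1 \<le> j" "j \<le> N" shows "del N j permutes {1..N}"
proof (rule bij_imp_permutes)
  show "bij_betw (del N j) {1..N} {1..N}"
    by (rule bij_betw_byWitness[where f'="ins N j"]) (use assms in \<open>auto simp: ins_del del_ins, auto simp: ins_def del_def\<close>)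
  show "\<And>x. x \<notin> {1..N} \<Longrightarrow> del N j x = x" using assms by (auto simp: del_def)
qed

definition ddec :: "nat \<Rightarrow> (nat \<Rightarrow> nat) \<Rightarrow> (nat \<Rightarrow> nat) \<times> nat" where
  "ddec n p = (p \<circ> del (Suc n) (inv p (Suc n)), inv p (Suc n))"

lemma ddec_bij: "bij_betw (ddec n) (P (Suc n)) (P n \<times> {1..Suc n})"
proof (rule bij_betw_byWitness[where f'="\<lambda>(p,j). p \<circ> ins (Suc n) j"])
  show "\<forall>a\<in>P (Suc n). (\<lambda>(p,j). p \<circ> ins (Suc n) j) (ddec n a) = a"
  proof
    fix p assume p: "p \<in> P (Suc n)"
    have "inv p (Suc n) \<in> {1..Suc n}" using permutes_in_image[OF permutes_inv[OF p[unfolded P_def, simplified]]] by simp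
    then show "(\<lambda>(p,j). p \<circ> ins (Suc n) j) (ddec n p) = p"
      by (auto simp: ddec_def fun_eq_iff ins_del del_ins)
  qed
  show "\<forall>a'\<in>P n \<times> {1..Suc n}. ddec n ((\<lambda>(p,j). p \<circ> ins (Suc n) j) a') = a'"
  proof
    fix a' assume "a' \<in> P n \<times> {1..Suc n}"
    then obtain p c where a: "a' = (p,c)" "p permutes {1..n}" "c \<in> {1..Suc n}" by (auto simp: P_def)
    have pp: "p \<circ> ins (Suc n) c permutes {1..Suc n}"
      by (rule permutes_compose) (use a permutes_subset[OF a(2)] ins_permutes in \<open>auto\<close>)
    have "(p \<circ> ins (Suc n) c) c = Suc n" using permutes_not_in[OF a(2)] by (simp add: ins_def)
    then have "inv (p \<circ> ins (Suc n) c) (Suc n) = c" using permutes_inv_eq[OF pp] by blast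
    then show "ddec n ((\<lambda>(p,j). p \<circ> ins (Suc n) j) a') = a'"
      using a by (auto simp add: ddec_def fun_eq_iff del_ins ins_del)
  qed
  show "ddec n ` P (Suc n) \<subseteq> P n \<times> {1..Suc n}"
  proof
    fix y assume "y \<in> ddec n ` P (Suc n)"
    then obtain p where p: "p permutes {1..Suc n}" "y = ddec n p" by (auto simp: P_def)
    let ?c = "inv p (Suc n)"
    have c: "?c \<in> {1..Suc n}" using permutes_in_image[OF permutes_inv[OF p(1)]] by simp
    have pc: "p ?c = Suc n" using permutes_inverses[OF p(1)] by simp
    have q: "p \<circ> del (Suc n) ?c permutes {1..Suc n}"
      by (rule permutes_compose) (use p c del_permutes in auto)
    have "p \<circ> del (Suc n) ?c permutes {1..n}"
    proof (rule permutes_superset[OF q])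
      fix x assume "x \<in> {1..Suc n} - {1..n}"
      then have "x = Suc n" by auto
      then show "(p \<circ> del (Suc n) ?c) x = x" using pc c by (simp add: del_def)
    qed
    then show "y \<in> P n \<times> {1..Suc n}" using p c by (simp add: ddec_def P_def)
  qed
  show "(\<lambda>(p,c). p \<circ> ins (Suc n) c) ` (P n \<times> {1..Suc n}) \<subseteq> P (Suc n)"
  proof
    fix y assume "y \<in> (\<lambda>(p,c). p \<circ> ins (Suc n) c) ` (P n \<times> {1..Suc n})"
    then obtain p c where a: "y = p \<circ> ins (Suc n) c" "p permutes {1..n}" "c \<in> {1..Suc n}" by (auto simp: P_def)
    have "p \<circ> ins (Suc n) c permutes {1..Suc n}"
      by (rule permutes_compose) (use a permutes_subset[OF a(2)] ins_permutes in \<open>auto\<close>)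
    then show "y \<in> P (Suc n)" using a by (simp add: P_def)
  qed
qed

definition Dset :: "nat \<Rightarrow> (nat \<Rightarrow> nat) \<Rightarrow> nat set" where
  "Dset n p = {i\<in>{1..<n}. p i > p (Suc i)}"

lemma Dset_sub: "Dset n p \<subseteq> {1..<n}" unfolding Dset_def by auto

lemma desc_set:
  assumes p: "p permutes {1..n}" and j: "1 \<le> j" "j \<le> Suc n"
  shows "Dset (Suc n) (p \<circ> ins (Suc n) j) =
     {i\<in>Dset n p. Suc i < j} \<union> {i. i = j \<and> j \<le> n} \<union> Suc ` {i\<in>Dset n p. j \<le> i}"
proof (intro set_eqI)
  fix i
  have pv: "x \<in> {1..n} \<Longrightarrow> p x \<le> n" for x using permutes_in_image[OF p, of x] by auto
  have pv1: "x \<in> {1..n} \<Longrightarrow> 1 \<le> p x" for x using permutes_in_image[OF p, of x] by auto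
  have pN: "p (Suc n) = Suc n" using permutes_not_in[OF p] by simp
  consider "Suc i < j" | "Suc i = j" | "i = j" | "j < i" by linarith
  then show "i \<in> Dset (Suc n) (p \<circ> ins (Suc n) j) \<longleftrightarrow>
     i \<in> {i\<in>Dset n p. Suc i < j} \<union> {i. i = j \<and> j \<le> n} \<union> Suc ` {i\<in>Dset n p. j \<le> i}"
  proof cases
    case 1 then show ?thesis using j by (auto simp: Dset_def ins_def image_iff)
  next
    case 2 then show ?thesis using j pv[of i] pN by (auto simp: Dset_def ins_def image_iff)
  next
    case 3 then show ?thesis using j pv[of j] pN by (auto simp: Dset_def ins_def image_iff)
  next
    case 4
    then obtain i' where i': "i = Suc i'" "j \<le> i'" by (metis Suc_le_eq less_imp_Suc_add le_add1)
    then show ?thesis using j by (auto simp: Dset_def ins_def image_iff)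
  qed
qed

lemma desc_stat:
  assumes p: "p permutes {1..n}" and j: "1 \<le> j" "j \<le> Suc n"
  shows "card (Dset (Suc n) (p \<circ> ins (Suc n) j)) = card (Dset n p) + (if j \<le> n \<and> j - 1 \<notin> Dset n p then 1 else 0)"
proof -
  let ?D = "Dset n p"
  have fD: "finite ?D" using Dset_sub finite_subset by blast
  let ?A1 = "{i\<in>?D. Suc i < j}" and ?A2 = "{i. i = j \<and> j \<le> n}" and ?B3 = "{i\<in>?D. j \<le> i}"
  let ?B2 = "{i\<in>?D. Suc i = j}"
  have f1: "finite ?A1" "finite ?B3" "finite ?B2" using fD by auto
  have f2: "finite ?A2" by auto
  have "card (Dset (Suc n) (p \<circ> ins (Suc n) j)) = card (?A1 \<union> ?A2 \<union> Suc ` ?B3)"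
    using desc_set[OF p j] by simp
  also have "\<dots> = card ?A1 + card ?A2 + card (Suc ` ?B3)"
  proof -
    have d1: "(?A1 \<union> ?A2) \<inter> Suc ` ?B3 = {}" by auto
    have d2: "?A1 \<inter> ?A2 = {}" by auto
    show ?thesis using card_Un_disjoint[OF _ _ d1] card_Un_disjoint[OF _ _ d2] f1 f2 by simp
  qed
  also have "card (Suc ` ?B3) = card ?B3" by (rule card_image) simp
  finally have e1: "card (Dset (Suc n) (p \<circ> ins (Suc n) j)) = card ?A1 + card ?A2 + card ?B3" .
  have "?D = ?A1 \<union> ?B2 \<union> ?B3" by auto
  then have e2: "card ?D = card ?A1 + card ?B2 + card ?B3"
  proof -
    have d1: "(?A1 \<union> ?B2) \<inter> ?B3 = {}" by auto
    have d2: "?A1 \<inter> ?B2 = {}" by auto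
    show ?thesis using card_Un_disjoint[OF _ _ d1] card_Un_disjoint[OF _ _ d2] f1 \<open>?D = ?A1 \<union> ?B2 \<union> ?B3\<close> by simp
  qed
  have c2: "card ?A2 = (if j \<le> n then 1 else 0)"
  proof (cases "j \<le> n")
    case True then have "?A2 = {j}" by auto
    then show ?thesis using True by simp
  qed simp
  have c3: "card ?B2 = (if j - 1 \<in> ?D then 1 else 0)"
  proof (cases "j - 1 \<in> ?D")
    case True then have "?B2 = {j - 1}" using j by auto
    then show ?thesis using True by simp
  next
    case False then have e: "?B2 = {}" using j by auto
    have "card ?B2 = 0" unfolding e by simp
    then show ?thesis using False by simp
  qed
  have "j - 1 \<in> ?D \<Longrightarrow> j \<le> n" using Dset_sub[of n p] j by fastforce
  then show ?thesis using e1 e2 c2 c3 by auto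
qed

lemma desc_stat2:
  assumes "p' \<in> P (Suc n)"
  shows "num_descents (Suc n) p' + 1 = (num_descents n (fst (ddec n p')) + 1) +
           (if snd (ddec n p') \<le> n \<and> snd (ddec n p') - 1 \<notin> Dset n (fst (ddec n p')) then 1 else 0)"
proof -
  have "ddec n p' \<in> P n \<times> {1..Suc n}" using bij_betwE[OF ddec_bij] assms by blast
  then have a: "fst (ddec n p') permutes {1..n}" "1 \<le> snd (ddec n p')" "snd (ddec n p') \<le> Suc n" by (auto simp: P_def)
  have "p' = fst (ddec n p') \<circ> ins (Suc n) (snd (ddec n p'))"
    using a by (simp add: ddec_def fun_eq_iff ins_del del_ins)
  then show ?thesis using desc_stat[OF a] by (simp add: num_descents_def Dset_def)
qed

lemma P_desc_rec:
  "card {p\<in>P (Suc n). num_descents (Suc n) p + 1 = k} =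
     k * card {g\<in>P n. num_descents n g + 1 = k} + (Suc n - (k - 1)) * card {g\<in>P n. Suc (num_descents n g + 1) = k}"
proof (rule count_rec[OF ddec_bij, where s = "\<lambda>g. num_descents n g + 1" and \<delta> = "\<lambda>g j. j \<le> n \<and> j - 1 \<notin> Dset n g"])
  show "finite (P n)" by (rule finite_P)
  show "\<And>a. finite {1..Suc n}" by simp
  show "\<And>x. x \<in> P (Suc n) \<Longrightarrow> num_descents (Suc n) x + 1 = (num_descents n (fst (ddec n x)) + 1) + (if snd (ddec n x) \<le> n \<and> snd (ddec n x) - 1 \<notin> Dset n (fst (ddec n x)) then 1 else 0)"
    by (rule desc_stat2)
  fix g
  let ?D = "Dset n g"
  have fD: "finite ?D" using Dset_sub finite_subset by blast
  have e: "{c\<in>{1..Suc n}. \<not> (c \<le> n \<and> c - 1 \<notin> ?D)} = insert (Suc n) (Suc ` ?D)"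
  proof (intro set_eqI iffI)
    fix c assume c: "c \<in> {c\<in>{1..Suc n}. \<not> (c \<le> n \<and> c - 1 \<notin> ?D)}"
    show "c \<in> insert (Suc n) (Suc ` ?D)"
    proof (cases "c = Suc n")
      case False
      then have "c - 1 \<in> ?D" "c = Suc (c - 1)" using c by auto
      then show ?thesis by (metis imageI insertI2)
    qed simp
  next
    fix c assume c: "c \<in> insert (Suc n) (Suc ` ?D)"
    show "c \<in> {c\<in>{1..Suc n}. \<not> (c \<le> n \<and> c - 1 \<notin> ?D)}"
      using c Dset_sub[of n g] by auto
  qed
  have ni: "Suc n \<notin> Suc ` ?D" using Dset_sub[of n g] by auto
  have c0: "card {c\<in>{1..Suc n}. \<not> (c \<le> n \<and> c - 1 \<notin> ?D)} = card ?D + 1"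
    unfolding e using ni fD by (simp add: card_image)
  then show "card {c\<in>{1..Suc n}. \<not> (c \<le> n \<and> c - 1 \<notin> ?D)} = num_descents n g + 1"
    by (simp add: num_descents_def Dset_def)
  have "{c\<in>{1..Suc n}. c \<le> n \<and> c - 1 \<notin> ?D} = {1..Suc n} - {c\<in>{1..Suc n}. \<not> (c \<le> n \<and> c - 1 \<notin> ?D)}"
    by auto
  then have "card {c\<in>{1..Suc n}. c \<le> n \<and> c - 1 \<notin> ?D} = Suc n - (card ?D + 1)"
  proof -
    have "card ({1..Suc n} - {c\<in>{1..Suc n}. \<not> (c \<le> n \<and> c - 1 \<notin> ?D)}) = card {1..Suc n} - card {c\<in>{1..Suc n}. \<not> (c \<le> n \<and> c - 1 \<notin> ?D)}"
      by (rule card_Diff_subset) auto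
    then show ?thesis using c0 \<open>{c\<in>{1..Suc n}. c \<le> n \<and> c - 1 \<notin> ?D} = _\<close> by simp
  qed
  then show "card {c\<in>{1..Suc n}. c \<le> n \<and> c - 1 \<notin> ?D} = Suc n - (num_descents n g + 1)"
    by (simp add: num_descents_def Dset_def)
qed

lemma Suc_filter: "{g\<in>X. Suc (s g) = k} = (if k = 0 then {} else {g\<in>X. s g = k - 1})"
  by auto

lemma cyc_eq: "card {f\<in>SE n. zeros n f = k} = card {p\<in>P n. num_cycles n p = k}"
proof (induction n arbitrary: k)
  case 0
  show ?case by (cases "k = 0") (simp_all add: SE_0 P_0 zeros_def num_cycles_def)
next
  case (Suc n)
  show ?case unfolding SE_zeros_rec P_cycles_rec Suc_filter using Suc.IH by simp
qed

lemma desc_eq_Suc: "card {f\<in>SE (Suc m). nonim (Suc m) f = k} = card {p\<in>P (Suc m). num_descents (Suc m) p + 1 = k}"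
proof (induction m arbitrary: k)
  case 0
  have a: "nonim 0 g = 0" for g by (simp add: nonim_def NI_def)
  have b: "num_descents 0 g = 0" for g by (simp add: num_descents_def)
  show ?case unfolding SE_nonim_rec P_desc_rec Suc_filter
    by (cases "k = 0"; cases "k = 1"; cases "k = 2"; simp add: SE_0 P_0 a b)
next
  case (Suc n)
  show ?case unfolding SE_nonim_rec[of "Suc n"] P_desc_rec[of "Suc n"] Suc_filter using Suc.IH by simp
qed

definition blk :: "nat \<Rightarrow> (nat \<Rightarrow> nat) \<Rightarrow> nat \<Rightarrow> nat set" where
  "blk n f i = insert i {j\<in>{1..n}. f j = i}"

definition idx :: "nat \<Rightarrow> (nat \<Rightarrow> nat) \<Rightarrow> nat \<Rightarrow> bool" where
  "idx n f i \<longleftrightarrow> i \<in> {1..n} \<and> (f i = 0 \<or> i \<in> f ` {1..n})"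

definition LP :: "nat \<Rightarrow> (nat \<Rightarrow> nat) \<Rightarrow> nat set set" where
  "LP n f = blk n f ` {i. idx n f i}"

definition par :: "nat set set \<Rightarrow> nat \<Rightarrow> nat" where
  "par \<pi> j = (if \<exists>B\<in>\<pi>. j \<in> B \<and> Min B < j then Min (SOME B. B \<in> \<pi> \<and> j \<in> B \<and> Min B < j) else 0)"

lemma SE_lt: "f \<in> SE n \<Longrightarrow> j \<in> {1..n} \<Longrightarrow> f j < j" unfolding SE_def by auto
lemma SE_out: "f \<in> SE n \<Longrightarrow> j \<notin> {1..n} \<Longrightarrow> f j = 0" unfolding SE_def by auto
lemma SE_rng: "f \<in> SE n \<Longrightarrow> j \<in> {1..n} \<Longrightarrow> f j \<noteq> 0 \<Longrightarrow> f j \<in> {1..n}"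
  using SE_lt[of f n j] by auto

lemma blk_fin: "finite (blk n f i)" unfolding blk_def by auto

lemma blk_min: assumes "f \<in> SE n" shows "Min (blk n f i) = i"
proof (rule Min_eqI[OF blk_fin])
  show "i \<in> blk n f i" unfolding blk_def by simp
  fix y assume "y \<in> blk n f i"
  then show "i \<le> y" unfolding blk_def using SE_lt[OF assms, of y] by auto
qed

lemma blk_card: assumes "f \<in> SE n" shows "card (blk n f i) = 1 \<longleftrightarrow> i \<notin> f ` {1..n}"
proof -
  have ni: "i \<notin> {j\<in>{1..n}. f j = i}" using SE_lt[OF assms, of i] by auto
  have "card (blk n f i) = Suc (card {j\<in>{1..n}. f j = i})"
    unfolding blk_def using ni by simp
  moreover have "{j\<in>{1..n}. f j = i} = {} \<longleftrightarrow> i \<notin> f ` {1..n}" by auto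
  ultimately show ?thesis by simp
qed

lemma blk_inj: assumes "f \<in> SE n" "blk n f i = blk n f i'" shows "i = i'"
proof -
  have "i = Min (blk n f i)" using blk_min[OF assms(1)] by simp
  also have "\<dots> = Min (blk n f i')" using assms(2) by (rule arg_cong)
  also have "\<dots> = i'" by (rule blk_min[OF assms(1)])
  finally show ?thesis .
qed

lemma blk_mem: "x \<in> blk n f i \<longleftrightarrow> x = i \<or> (x \<in> {1..n} \<and> f x = i)"
  unfolding blk_def by auto

lemma LP_mem: "B \<in> LP n f \<longleftrightarrow> (\<exists>i. idx n f i \<and> B = blk n f i)"
  unfolding LP_def by auto

lemma idx_par: assumes "f \<in> SE n" "j \<in> {1..n}" "f j \<noteq> 0" shows "idx n f (f j)"
  using SE_rng[OF assms] assms(2) unfolding idx_def by auto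

lemma LP_in: assumes f: "f \<in> SE n" shows "LP n f \<in> linked_partitions n"
  unfolding linked_partitions_def
proof (intro CollectI conjI ballI impI)
  fix B assume "B \<in> LP n f"
  then obtain i where i: "idx n f i" "B = blk n f i" by (auto simp: LP_mem)
  then show "B \<noteq> {}" by (auto simp: blk_def)
  show "B \<subseteq> {1..n}" using i by (auto simp: blk_def idx_def)
next
  show "\<Union> (LP n f) = {1..n}"
  proof
    show "\<Union> (LP n f) \<subseteq> {1..n}" by (auto simp: LP_def blk_def idx_def)
    show "{1..n} \<subseteq> \<Union> (LP n f)"
    proof
      fix j assume j: "j \<in> {1..n}"
      show "j \<in> \<Union> (LP n f)"
      proof (cases "idx n f j")
        case True
        then show ?thesis by (auto simp: LP_def blk_def)
      next
        case False
        then have "f j \<noteq> 0" using j by (auto simp: idx_def)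
        then have "idx n f (f j)" by (rule idx_par[OF f j])
        moreover have "j \<in> blk n f (f j)" using j by (simp add: blk_mem)
        ultimately show ?thesis by (auto simp: LP_def)
      qed
    qed
  qed
next
  fix E F assume E: "E \<in> LP n f" and F: "F \<in> LP n f" and EF: "E \<noteq> F"
  obtain i where i: "idx n f i" "E = blk n f i" using E by (auto simp: LP_mem)
  obtain i' where i': "idx n f i'" "F = blk n f i'" using F by (auto simp: LP_mem)
  have ii: "i \<noteq> i'" using EF i i' by auto
  have mE: "Min E = i" and mF: "Min F = i'" using i i' blk_min[OF f] by auto
  show "nearly_disjoint E F"
    unfolding nearly_disjoint_def
  proof
    fix x assume x: "x \<in> E \<inter> F"
    then have xE: "x = i \<or> (x \<in> {1..n} \<and> f x = i)" and xF: "x = i' \<or> (x \<in> {1..n} \<and> f x = i')"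
      using i i' by (auto simp: blk_mem)
    show "(x = Min E \<and> card E > 1 \<and> x \<noteq> Min F) \<or> (x = Min F \<and> card F > 1 \<and> x \<noteq> Min E)"
    proof (cases "x = i")
      case True
      then have fx: "x \<in> {1..n}" "f x = i'" using xF ii by auto
      have "i' \<noteq> 0" using i' by (auto simp: idx_def)
      then have "i \<in> f ` {1..n}" using i(1) fx True unfolding idx_def by auto
      then have "card E \<noteq> 1" using blk_card[OF f] i by simp
      moreover have "card E \<noteq> 0" using i blk_fin by (auto simp: blk_def)
      ultimately show ?thesis using True mE mF ii by auto
    next
      case False
      then have fx: "x \<in> {1..n}" "f x = i" using xE by auto
      then have x': "x = i'" using xF ii by auto
      have "i \<noteq> 0" using i by (auto simp: idx_def)
      then have "i' \<in> f ` {1..n}" using i'(1) fx x' unfolding idx_def by auto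
      then have "card F \<noteq> 1" using blk_card[OF f] i' by simp
      moreover have "card F \<noteq> 0" using i' blk_fin by (auto simp: blk_def)
      ultimately show ?thesis using x' mE mF ii by auto
    qed
  qed
qed

lemma par_LP: assumes f: "f \<in> SE n" shows "par (LP n f) = f"
proof
  fix j
  have ex: "(\<exists>B\<in>LP n f. j \<in> B \<and> Min B < j) \<longleftrightarrow> (j \<in> {1..n} \<and> f j \<noteq> 0)"
  proof
    assume "\<exists>B\<in>LP n f. j \<in> B \<and> Min B < j"
    then obtain B where B: "B \<in> LP n f" "j \<in> B" "Min B < j" by blast
    then obtain i where i: "idx n f i" "B = blk n f i" by (auto simp: LP_mem)
    have "Min B = i" using i blk_min[OF f] by simp
    then have "j \<in> {1..n}" "f j = i" using B i by (auto simp: blk_mem)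
    then show "j \<in> {1..n} \<and> f j \<noteq> 0" using i(1) by (auto simp: idx_def)
  next
    assume j: "j \<in> {1..n} \<and> f j \<noteq> 0"
    then have "idx n f (f j)" using idx_par[OF f] by blast
    then have "blk n f (f j) \<in> LP n f" by (auto simp: LP_mem)
    moreover have "j \<in> blk n f (f j)" using j by (simp add: blk_mem)
    moreover have "Min (blk n f (f j)) < j" using blk_min[OF f] SE_lt[OF f] j by simp
    ultimately show "\<exists>B\<in>LP n f. j \<in> B \<and> Min B < j" by blast
  qed
  have mins: "Min B = f j" if B: "B \<in> LP n f" "j \<in> B" "Min B < j" for B
  proof -
    obtain i where i: "idx n f i" "B = blk n f i" using B by (auto simp: LP_mem)
    have "Min B = i" using i blk_min[OF f] by simp
    then show ?thesis using B i by (auto simp: blk_mem)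
  qed
  show "par (LP n f) j = f j"
  proof (cases "j \<in> {1..n} \<and> f j \<noteq> 0")
    case True
    then have e: "\<exists>B. B \<in> LP n f \<and> j \<in> B \<and> Min B < j" using ex by auto
    from someI_ex[OF e] have "Min (SOME B. B \<in> LP n f \<and> j \<in> B \<and> Min B < j) = f j"
      using mins by blast
    moreover have "par (LP n f) j = Min (SOME B. B \<in> LP n f \<and> j \<in> B \<and> Min B < j)"
      unfolding par_def using e by (simp add: Bex_def)
    ultimately show ?thesis by simp
  next
    case False
    then have "f j = 0" using SE_out[OF f] by auto
    moreover have "\<not> (\<exists>B\<in>LP n f. j \<in> B \<and> Min B < j)" using False ex by blast
    then have "par (LP n f) j = 0" unfolding par_def by (rule if_not_P)
    ultimately show ?thesis by simp
  qed
qed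

lemma lp_facts:
  assumes "\<pi> \<in> linked_partitions n" "B \<in> \<pi>"
  shows "finite B" "B \<noteq> {}" "B \<subseteq> {1..n}" "Min B \<in> B" "\<And>x. x \<in> B \<Longrightarrow> Min B \<le> x" "Min B \<ge> 1"
proof -
  show B: "B \<noteq> {}" "B \<subseteq> {1..n}" using assms unfolding linked_partitions_def by auto
  show f: "finite B" using B finite_subset by blast
  show m: "Min B \<in> B" using Min_in[OF f B(1)] .
  show "\<And>x. x \<in> B \<Longrightarrow> Min B \<le> x" using f by simp
  show "Min B \<ge> 1" using m B by auto
qed

lemma lp_nd:
  assumes "\<pi> \<in> linked_partitions n" "E \<in> \<pi>" "F \<in> \<pi>" "E \<noteq> F"
  shows "nearly_disjoint E F"
  using assms unfolding linked_partitions_def by auto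

lemma par_SE: assumes pi: "\<pi> \<in> linked_partitions n" shows "par \<pi> \<in> SE n"
  unfolding SE_def
proof (intro CollectI conjI allI ballI impI)
  fix j assume j: "j \<in> {1..n}"
  show "par \<pi> j < j"
  proof (cases "\<exists>B\<in>\<pi>. j \<in> B \<and> Min B < j")
    case True
    then have e: "\<exists>B. B \<in> \<pi> \<and> j \<in> B \<and> Min B < j" by blast
    have "Min (SOME B. B \<in> \<pi> \<and> j \<in> B \<and> Min B < j) < j" using someI_ex[OF e] by blast
    moreover have "par \<pi> j = Min (SOME B. B \<in> \<pi> \<and> j \<in> B \<and> Min B < j)" unfolding par_def by (rule if_P[OF True])
    ultimately show ?thesis by simp
  next
    case False
    then have "par \<pi> j = 0" unfolding par_def by (rule if_not_P)
    then show ?thesis using j by simp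
  qed
next
  fix j assume j: "j \<notin> {1..n}"
  have "\<not> (\<exists>B\<in>\<pi>. j \<in> B \<and> Min B < j)" using lp_facts(3)[OF pi] j by blast
  then show "par \<pi> j = 0" unfolding par_def by (rule if_not_P)
qed

lemma par_K1:
  assumes pi: "\<pi> \<in> linked_partitions n" and B: "B \<in> \<pi>" "j \<in> B" "Min B < j"
  shows "par \<pi> j = Min B"
proof -
  have e: "\<exists>B. B \<in> \<pi> \<and> j \<in> B \<and> Min B < j" using B by blast
  define B' where "B' = (SOME B. B \<in> \<pi> \<and> j \<in> B \<and> Min B < j)"
  have B': "B' \<in> \<pi>" "j \<in> B'" "Min B' < j" using someI_ex[OF e] unfolding B'_def by blast+
  have "B' = B"
  proof (rule ccontr)
    assume "B' \<noteq> B"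
    then have "nearly_disjoint B B'" using lp_nd[OF pi B(1) B'(1)] by auto
    moreover have "j \<in> B \<inter> B'" using B B' by simp
    ultimately have "(j = Min B \<and> card B > 1 \<and> j \<noteq> Min B') \<or> (j = Min B' \<and> card B' > 1 \<and> j \<noteq> Min B)"
      unfolding nearly_disjoint_def by blast
    then show False using B B' by auto
  qed
  moreover have "par \<pi> j = Min B'" unfolding par_def B'_def by (rule if_P) (use B in blast)
  ultimately show ?thesis by simp
qed

lemma par_K2:
  assumes pi: "\<pi> \<in> linked_partitions n" and g: "par \<pi> j \<noteq> 0"
  shows "\<exists>B\<in>\<pi>. j \<in> B \<and> Min B < j \<and> par \<pi> j = Min B"
proof -
  have c: "\<exists>B\<in>\<pi>. j \<in> B \<and> Min B < j"
  proof (rule ccontr)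
    assume "\<not> (\<exists>B\<in>\<pi>. j \<in> B \<and> Min B < j)"
    then have "par \<pi> j = 0" unfolding par_def by (rule if_not_P)
    then show False using g by simp
  qed
  then obtain B where "B \<in> \<pi>" "j \<in> B" "Min B < j" by blast
  then show ?thesis using par_K1[OF pi] by blast
qed

lemma lp_K3:
  assumes pi: "\<pi> \<in> linked_partitions n" and B: "B \<in> \<pi>" "B' \<in> \<pi>" "Min B = Min B'"
  shows "B = B'"
proof (rule ccontr)
  assume "B \<noteq> B'"
  then have "nearly_disjoint B B'" using lp_nd[OF pi B(1,2)] by auto
  moreover have "Min B \<in> B \<inter> B'" using lp_facts(4)[OF pi B(1)] lp_facts(4)[OF pi B(2)] B(3) by simp
  ultimately have "(Min B = Min B \<and> card B > 1 \<and> Min B \<noteq> Min B') \<or> (Min B = Min B' \<and> card B' > 1 \<and> Min B \<noteq> Min B)"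
    unfolding nearly_disjoint_def by blast
  then show False using B(3) by simp
qed

lemma lp_C1:
  assumes pi: "\<pi> \<in> linked_partitions n" and B: "B \<in> \<pi>"
  shows "B = blk n (par \<pi>) (Min B)"
proof
  show "B \<subseteq> blk n (par \<pi>) (Min B)"
  proof
    fix x assume x: "x \<in> B"
    show "x \<in> blk n (par \<pi>) (Min B)"
    proof (cases "x = Min B")
      case False
      then have "Min B < x" using lp_facts(5)[OF pi B x] by simp
      then have "par \<pi> x = Min B" using par_K1[OF pi B x] by simp
      moreover have "x \<in> {1..n}" using lp_facts(3)[OF pi B] x by auto
      ultimately show ?thesis by (simp add: blk_mem)
    qed (simp add: blk_mem)
  qed
  show "blk n (par \<pi>) (Min B) \<subseteq> B"
  proof
    fix x assume x: "x \<in> blk n (par \<pi>) (Min B)"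
    show "x \<in> B"
    proof (cases "x = Min B")
      case True then show ?thesis using lp_facts(4)[OF pi B] by simp
    next
      case False
      have gx: "par \<pi> x = Min B" using x False unfolding blk_mem by blast
      then have "par \<pi> x \<noteq> 0" using lp_facts(6)[OF pi B] by simp
      then obtain B' where B': "B' \<in> \<pi>" "x \<in> B'" "par \<pi> x = Min B'" using par_K2[OF pi] by blast
      have "Min B' = Min B" using B'(3) gx by simp
      then have "B' = B" by (rule lp_K3[OF pi B'(1) B])
      then show ?thesis using B' by simp
    qed
  qed
qed

lemma lp_C2:
  assumes pi: "\<pi> \<in> linked_partitions n" and B: "B \<in> \<pi>"
  shows "idx n (par \<pi>) (Min B)"
proof -
  let ?m = "Min B" and ?g = "par \<pi>"
  have mr: "?m \<in> {1..n}" using lp_facts(3,4)[OF pi B] by auto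
  have "?g ?m = 0 \<or> ?m \<in> ?g ` {1..n}"
  proof (cases "?g ?m = 0")
    case False
    then obtain B' where B': "B' \<in> \<pi>" "?m \<in> B'" "Min B' < ?m" using par_K2[OF pi] by blast
    then have "B' \<noteq> B" by auto
    then have "nearly_disjoint B B'" using lp_nd[OF pi B B'(1)] by simp
    moreover have "?m \<in> B \<inter> B'" using B' lp_facts(4)[OF pi B] by simp
    ultimately have "(?m = Min B \<and> card B > 1 \<and> ?m \<noteq> Min B') \<or> (?m = Min B' \<and> card B' > 1 \<and> ?m \<noteq> Min B)"
      unfolding nearly_disjoint_def by blast
    then have "card B > 1" using B' by auto
    then have "B \<noteq> {?m}"
    proof (intro notI)
      assume c: "card B > 1" and e: "B = {?m}"
      have "card B = card {?m}" using e by (rule arg_cong)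
      then show False using c by simp
    qed
    then obtain x where x: "x \<in> B" "x \<noteq> ?m" using lp_facts(4)[OF pi B] by blast
    then have "?m < x" using lp_facts(5)[OF pi B x(1)] by simp
    then have "?g x = ?m" using par_K1[OF pi B x(1)] by simp
    moreover have "x \<in> {1..n}" using lp_facts(3)[OF pi B] x by auto
    ultimately show ?thesis by (metis image_eqI)
  qed simp
  then show ?thesis using mr unfolding idx_def by simp
qed

lemma LP_par: assumes pi: "\<pi> \<in> linked_partitions n" shows "LP n (par \<pi>) = \<pi>"
proof
  show "\<pi> \<subseteq> LP n (par \<pi>)"
  proof
    fix B assume B: "B \<in> \<pi>"
    show "B \<in> LP n (par \<pi>)" unfolding LP_mem using lp_C1[OF pi B] lp_C2[OF pi B] by blast
  qed
  show "LP n (par \<pi>) \<subseteq> \<pi>"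
  proof
    fix B assume "B \<in> LP n (par \<pi>)"
    then obtain i where i: "idx n (par \<pi>) i" "B = blk n (par \<pi>) i" by (auto simp: LP_mem)
    have ir: "i \<in> {1..n}" using i by (simp add: idx_def)
    show "B \<in> \<pi>"
    proof (cases "i \<in> par \<pi> ` {1..n}")
      case True
      then obtain j where j: "j \<in> {1..n}" "par \<pi> j = i" by auto
      then have "par \<pi> j \<noteq> 0" using ir by auto
      then obtain B' where B': "B' \<in> \<pi>" "j \<in> B'" "par \<pi> j = Min B'" using par_K2[OF pi] by blast
      then have "B' = blk n (par \<pi>) i" using lp_C1[OF pi B'(1)] j by simp
      then show ?thesis using B' i by simp
    next
      case False
      then have g0: "par \<pi> i = 0" using i by (simp add: idx_def)
      have "i \<in> \<Union>\<pi>" using pi ir unfolding linked_partitions_def by auto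
      then obtain B' where B': "B' \<in> \<pi>" "i \<in> B'" by auto
      have "Min B' = i"
      proof (rule ccontr)
        assume "Min B' \<noteq> i"
        then have "Min B' < i" using lp_facts(5)[OF pi B'] by (simp add: order_less_le)
        then have "par \<pi> i = Min B'" using par_K1[OF pi B'] by simp
        then show False using g0 lp_facts(6)[OF pi B'(1)] by simp
      qed
      then have "B' = blk n (par \<pi>) i" using lp_C1[OF pi B'(1)] by simp
      then show ?thesis using B' i by simp
    qed
  qed
qed

lemma LP_bij: "bij_betw (LP n) (SE n) (linked_partitions n)"
  by (rule bij_betw_byWitness[where f'=par]) (auto simp: par_LP LP_par LP_in par_SE)

lemma covering:
  assumes f: "f \<in> SE n" and j: "j \<in> {1..n}"
  shows "{B\<in>LP n f. j \<in> B} = (if idx n f j then {blk n f j} else {}) \<union> (if f j \<noteq> 0 then {blk n f (f j)} else {})"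
proof (intro set_eqI iffI)
  fix B assume "B \<in> {B\<in>LP n f. j \<in> B}"
  then obtain i where i: "idx n f i" "B = blk n f i" "j \<in> B" by (auto simp: LP_mem)
  then have "j = i \<or> f j = i" by (auto simp: blk_mem)
  moreover have "i \<noteq> 0" using i(1) by (auto simp: idx_def)
  ultimately show "B \<in> (if idx n f j then {blk n f j} else {}) \<union> (if f j \<noteq> 0 then {blk n f (f j)} else {})"
    using i by auto
next
  fix B assume B: "B \<in> (if idx n f j then {blk n f j} else {}) \<union> (if f j \<noteq> 0 then {blk n f (f j)} else {})"
  show "B \<in> {B\<in>LP n f. j \<in> B}"
  proof (cases "idx n f j \<and> B = blk n f j")
    case True
    then show ?thesis by (auto simp: LP_mem blk_mem)
  next
    case False
    then have "f j \<noteq> 0" "B = blk n f (f j)" using B by (auto split: if_splits)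
    then show ?thesis using idx_par[OF f j] j by (auto simp: LP_mem blk_mem)
  qed
qed

lemma singly_LP:
  assumes f: "f \<in> SE n" and j: "j \<in> {1..n}"
  shows "singly_covered (LP n f) j \<longleftrightarrow> (f j = 0 \<or> j \<notin> f ` {1..n})"
proof -
  have lt: "f j < j" using SE_lt[OF f j] .
  show ?thesis
  proof (cases "f j = 0")
    case True
    then have "idx n f j" using j by (simp add: idx_def)
    then have "{B\<in>LP n f. j \<in> B} = {blk n f j}" using covering[OF f j] True by simp
    then show ?thesis unfolding singly_covered_def using True by simp
  next
    case False
    show ?thesis
    proof (cases "j \<in> f ` {1..n}")
      case True
      then have "idx n f j" using j by (simp add: idx_def)
      then have e: "{B\<in>LP n f. j \<in> B} = {blk n f j, blk n f (f j)}" using covering[OF f j] False by auto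
      have "blk n f j \<noteq> blk n f (f j)"
      proof
        assume "blk n f j = blk n f (f j)"
        then have "j = f j" by (rule blk_inj[OF f])
        then show False using lt by simp
      qed
      then have "card {B\<in>LP n f. j \<in> B} = 2" unfolding e by simp
      then show ?thesis unfolding singly_covered_def using True False by simp
    next
      case nim: False
      then have "\<not> idx n f j" using False by (simp add: idx_def)
      then have "{B\<in>LP n f. j \<in> B} = {blk n f (f j)}" using covering[OF f j] False by simp
      then show ?thesis unfolding singly_covered_def using nim by simp
    qed
  qed
qed

lemma block_of_LP:
  assumes f: "f \<in> SE n" and j: "j \<in> {1..n}" and s: "singly_covered (LP n f) j"
  shows "Min (block_of (LP n f) j) = (if f j = 0 then j else f j)"
proof -
  define X where "X = (if f j = 0 then blk n f j else blk n f (f j))"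
  have "{B\<in>LP n f. j \<in> B} = {X}"
  proof (cases "f j = 0")
    case True
    then have "idx n f j" using j by (simp add: idx_def)
    then show ?thesis using covering[OF f j] True X_def by simp
  next
    case False
    then have "j \<notin> f ` {1..n}" using singly_LP[OF f j] s by simp
    then have "\<not> idx n f j" using False by (simp add: idx_def)
    then show ?thesis using covering[OF f j] False X_def by simp
  qed
  then have "block_of (LP n f) j = X" unfolding block_of_def
    by (intro the_equality) (auto simp: set_eq_iff)
  then show ?thesis unfolding X_def using blk_min[OF f] by simp
qed

lemma nsm_LP: assumes f: "f \<in> SE n" shows "num_singly_min n (LP n f) = zeros n f"
proof -
  have "{i\<in>{1..n}. singly_covered (LP n f) i \<and> i = Min (block_of (LP n f) i)} = {j\<in>{1..n}. f j = 0}"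
  proof (intro set_eqI iffI)
    fix i assume i: "i \<in> {i\<in>{1..n}. singly_covered (LP n f) i \<and> i = Min (block_of (LP n f) i)}"
    then have "i = (if f i = 0 then i else f i)" using block_of_LP[OF f] by auto
    moreover have "f i < i" using SE_lt[OF f] i by auto
    ultimately show "i \<in> {j\<in>{1..n}. f j = 0}" using i by (auto split: if_splits)
  next
    fix i assume i: "i \<in> {j\<in>{1..n}. f j = 0}"
    then have "singly_covered (LP n f) i" using singly_LP[OF f] by auto
    then show "i \<in> {i\<in>{1..n}. singly_covered (LP n f) i \<and> i = Min (block_of (LP n f) i)}"
      using block_of_LP[OF f] i by auto
  qed
  then show ?thesis unfolding num_singly_min_def zeros_def by simp
qed

lemma beta_LP: assumes f: "f \<in> SE n" shows "beta n (LP n f) = nonim n f"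
proof -
  let ?im = "f ` {1..n}"
  have s1: "{i\<in>{1..n}. singly_covered (LP n f) i \<and> i \<noteq> Min (block_of (LP n f) i)} = {i\<in>{1..n}. f i \<noteq> 0 \<and> i \<notin> ?im}"
  proof (intro set_eqI iffI)
    fix i assume i: "i \<in> {i\<in>{1..n}. singly_covered (LP n f) i \<and> i \<noteq> Min (block_of (LP n f) i)}"
    have m: "Min (block_of (LP n f) i) = (if f i = 0 then i else f i)" using block_of_LP[OF f] i by simp
    have "f i \<noteq> 0"
    proof
      assume "f i = 0"
      then have "Min (block_of (LP n f) i) = i" using m by simp
      then show False using i by simp
    qed
    then show "i \<in> {i\<in>{1..n}. f i \<noteq> 0 \<and> i \<notin> ?im}" using i singly_LP[OF f] by auto
  next
    fix i assume i: "i \<in> {i\<in>{1..n}. f i \<noteq> 0 \<and> i \<notin> ?im}"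
    then have "singly_covered (LP n f) i" using singly_LP[OF f] by auto
    moreover have "f i < i" using SE_lt[OF f] i by auto
    ultimately show "i \<in> {i\<in>{1..n}. singly_covered (LP n f) i \<and> i \<noteq> Min (block_of (LP n f) i)}"
      using block_of_LP[OF f] i by auto
  qed
  have s2: "{B\<in>LP n f. card B = 1} = blk n f ` {i\<in>{1..n}. f i = 0 \<and> i \<notin> ?im}"
  proof (intro set_eqI iffI)
    fix B assume "B \<in> {B\<in>LP n f. card B = 1}"
    then obtain i where i: "idx n f i" "B = blk n f i" "card B = 1" by (auto simp: LP_mem)
    then have "i \<notin> ?im" using blk_card[OF f] by simp
    then show "B \<in> blk n f ` {i\<in>{1..n}. f i = 0 \<and> i \<notin> ?im}" using i by (auto simp: idx_def)
  next
    fix B assume "B \<in> blk n f ` {i\<in>{1..n}. f i = 0 \<and> i \<notin> ?im}"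
    then obtain i where i: "i \<in> {1..n}" "f i = 0" "i \<notin> ?im" "B = blk n f i" by auto
    then have "idx n f i" by (simp add: idx_def)
    then show "B \<in> {B\<in>LP n f. card B = 1}" using i blk_card[OF f] by (auto simp: LP_mem)
  qed
  have "inj_on (blk n f) {i\<in>{1..n}. f i = 0 \<and> i \<notin> ?im}" using blk_inj[OF f] by (auto simp: inj_on_def)
  then have c2: "card {B\<in>LP n f. card B = 1} = card {i\<in>{1..n}. f i = 0 \<and> i \<notin> ?im}"
    unfolding s2 by (rule card_image)
  have "NI n f = {i\<in>{1..n}. f i \<noteq> 0 \<and> i \<notin> ?im} \<union> {i\<in>{1..n}. f i = 0 \<and> i \<notin> ?im}"
    unfolding NI_def by auto
  then have "card (NI n f) = card {i\<in>{1..n}. f i \<noteq> 0 \<and> i \<notin> ?im} + card {i\<in>{1..n}. f i = 0 \<and> i \<notin> ?im}"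
    by (simp add: card_Un_disjoint disjoint_iff)
  then show ?thesis unfolding beta_def nonim_def s1 c2 by simp
qed

lemma filt_card: "card {\<pi>\<in>linked_partitions n. Q \<pi>} = card {f\<in>SE n. Q (LP n f)}"
  using bij_betw_same_card[OF bij_betw_filter[OF LP_bij, where P=Q]] by simp

theorem corollary3p5:
  fixes n :: nat
  assumes "n \<ge> 1"
  shows "card (linked_partitions n) = fact n \<and>
         (\<forall>k. card {\<pi> \<in> linked_partitions n. num_singly_min n \<pi> = k} = stirling_cycles n k) \<and>
         (\<forall>k. card {\<pi> \<in> linked_partitions n. beta n \<pi> = k} = eulerian n k)"
proof (intro conjI allI)
  show "card (linked_partitions n) = fact n"
    using bij_betw_same_card[OF LP_bij[of n]] card_SE[of n] by simp
next
  fix k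
  have "card {\<pi> \<in> linked_partitions n. num_singly_min n \<pi> = k} = card {f\<in>SE n. num_singly_min n (LP n f) = k}"
    by (rule filt_card)
  also have "{f\<in>SE n. num_singly_min n (LP n f) = k} = {f\<in>SE n. zeros n f = k}"
    using nsm_LP by auto
  also have "card \<dots> = card {p\<in>P n. num_cycles n p = k}" by (rule cyc_eq)
  also have "{p\<in>P n. num_cycles n p = k} = {p. p permutes {1..n} \<and> num_cycles n p = k}"
    unfolding P_def by auto
  finally show "card {\<pi> \<in> linked_partitions n. num_singly_min n \<pi> = k} = stirling_cycles n k"
    unfolding stirling_cycles_def .
next
  fix k
  obtain m where m: "n = Suc m" using assms by (cases n) auto
  have "card {\<pi> \<in> linked_partitions n. beta n \<pi> = k} = card {f\<in>SE n. beta n (LP n f) = k}"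
    by (rule filt_card)
  also have "{f\<in>SE n. beta n (LP n f) = k} = {f\<in>SE n. nonim n f = k}"
    using beta_LP by auto
  also have "card \<dots> = card {p\<in>P n. num_descents n p + 1 = k}" unfolding m by (rule desc_eq_Suc)
  also have "{p\<in>P n. num_descents n p + 1 = k} = {p. p permutes {1..n} \<and> num_descents n p + 1 = k}"
    unfolding P_def by auto
  finally show "card {\<pi> \<in> linked_partitions n. beta n \<pi> = k} = eulerian n k"
    unfolding eulerian_def .
qed

end
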